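(* Let $d,n,k\ge1$, fix vectors $x^{(1)},\dots,x^{(n+1)}\in\mathbb{R}^d$ and $w_\star\in\mathbb{R}^d$, and set $y^{(i)}=\langle x^{(i)},w_\star\rangle$ for $i=1,\dots,n$. Let $$Z_0=\begin{bmatrix} x^{(1)} & \cdots & x^{(n)} & x^{(n+1)}\\ y^{(1)} & \cdots & y^{(n)} & 0\end{bmatrix}\in\mathbb{R}^{(d+1)\times(n+1)},\qquad M=\begin{bmatrix} I_n & 0\\ 0& 0\end{bmatrix}\in\mathbb{R}^{(n+1)\times(n+1)}.$$ Let $A_0,\dots,A_k\in\mathbb{R}^{d\times d}$ be symmetric, and set $P_i=\begin{bmatrix}0_{d\times d}&0\\0&1\end{bmatrix}$, $Q_i=\begin{bmatrix}A_i&0\\0&0\end{bmatrix}$, and $Z_{i+1}=Z_i+\frac1n P_iZ_iM(Z_i^\top Q_iZ_i)$ for $i=0,\dots,k$. Define $R_{w_\star}(w)=\frac{1}{2n}\sum_{i=1}^n\big(w^\top x^{(i)}-w_\star^\top x^{(i)}\big)^2$. Then there exist vectors $w^{\mathrm{gd}}_0,\dots,w^{\mathrm{gd}}_{k+1}\in\mathbb{R}^d$ such that the predicted label after layer $i$ satisfies $[Z_i]_{d+1,n+1}=-\langle x^{(n+1)},w^{\mathrm{gd}}_i\rangle$ for every $i\in\{0,\dots,k+1\}$, and such that for every $i\in\{0,\dots,k\}$ they are related by the preconditioned gradient step $$w^{\mathrm{gd}}_{i+1}=w^{\mathrm{gd}}_i+A_i\nabla R_{w_\star}(w^{\mathrm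{gd}}_i).$$
   Context: $[X]_{i,j}$ denotes the $(i,j)$ entry of a matrix $X$. The map $Z\mapsto PZM(Z^\top QZ)$ is a linear (softmax-free) self-attention layer with mask $M$. *)

theory Defs
  imports Complex_Main "Jordan_Normal_Form.Matrix"
begin

text \<open>Conventions: data vectors x^(1..n+1) are given by a function xs with
  xs j for j = 1..n+1; matrices use the 0-based indexing of Jordan_Normal_Form,
  so the paper's entry [Z]_{d+1,n+1} is Z $$ (d, n).\<close>

definition Z0_mat :: "nat \<Rightarrow> nat \<Rightarrow> (nat \<Rightarrow> real vec) \<Rightarrow> real vec \<Rightarrow> real mat" where
  "Z0_mat d n xs wstar = mat (d + 1) (n + 1) (\<lambda>(r, c).
     if r < d then xs (c + 1) $ r
     else if c < n then xs (c + 1) \<bullet> wstar else 0)"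

definition M_mat :: "nat \<Rightarrow> real mat" where
  "M_mat n = four_block_mat (1\<^sub>m n) (0\<^sub>m n 1) (0\<^sub>m 1 n) (0\<^sub>m 1 1)"

definition P_mat :: "nat \<Rightarrow> real mat" where
  "P_mat d = four_block_mat (0\<^sub>m d d) (0\<^sub>m d 1) (0\<^sub>m 1 d) (1\<^sub>m 1)"

definition Q_mat :: "nat \<Rightarrow> real mat \<Rightarrow> real mat" where
  "Q_mat d A = four_block_mat A (0\<^sub>m d 1) (0\<^sub>m 1 d) (0\<^sub>m 1 1)"

definition lsa :: "real mat \<Rightarrow> real mat \<Rightarrow> real mat \<Rightarrow> real mat \<Rightarrow> real mat" where
  "lsa P Q M Z = P * Z * M * (transpose_mat Z * Q * Z)"

fun Z_layers :: "nat \<Rightarrow> nat \<Rightarrow> (nat \<Rightarrow> real vec) \<Rightarrow> real vec \<Rightarrow> (nat \<Rightarrow> real mat) \<Rightarrow> nat \<Rightarrow> real mat" where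
  "Z_layers d n xs wstar A 0 = Z0_mat d n xs wstar"
| "Z_layers d n xs wstar A (Suc i) =
     (let Z = Z_layers d n xs wstar A i
      in Z + (1 / real n) \<cdot>\<^sub>m lsa (P_mat d) (Q_mat d (A i)) (M_mat n) Z)"

definition risk :: "nat \<Rightarrow> (nat \<Rightarrow> real vec) \<Rightarrow> real vec \<Rightarrow> real vec \<Rightarrow> real" where
  "risk n xs wstar w = 1 / (2 * real n) * (\<Sum>i = 1..n. (w \<bullet> xs i - wstar \<bullet> xs i)^2)"

definition grad :: "nat \<Rightarrow> (real vec \<Rightarrow> real) \<Rightarrow> real vec \<Rightarrow> real vec" where
  "grad d f w = vec d (\<lambda>j. THE D. ((\<lambda>t. f (w + t \<cdot>\<^sub>v unit_vec d j)) has_real_derivative D) (at 0))"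

end

theory Submission imports Defs begin

lemma P_eq: "P_mat d = mat (d+1) (d+1) (\<lambda>(r,s). if r = d \<and> s = d then 1 else 0)"
  unfolding P_mat_def by (rule eq_matI) auto

lemma M_eq: "M_mat n = mat (n+1) (n+1) (\<lambda>(r,s). if r = s \<and> r < n then 1 else 0)"
  unfolding M_mat_def by (rule eq_matI) auto

lemma Q_eq: "A \<in> carrier_mat d d \<Longrightarrow>
  Q_mat d A = mat (d+1) (d+1) (\<lambda>(r,s). if r < d \<and> s < d then A $$ (r,s) else 0)"
  unfolding Q_mat_def by (rule eq_matI) auto

lemma mat_of: "Z \<in> carrier_mat a b \<Longrightarrow> Z = mat a b (\<lambda>(i,j). Z $$ (i,j))"
  by (rule eq_matI) auto

lemma mat_mult: "mat a b f * mat b c g = mat a c (\<lambda>(i,j). \<Sum>s<b. f (i,s) * (g (s,j) :: real))"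
  by (rule eq_matI) (auto simp: scalar_prod_def row_def col_def lessThan_atLeast0 intro!: sum.cong)

lemma transpose_mat_eq: "transpose_mat (mat a b f) = mat b a (\<lambda>(i,j). f (j,i))"
  by (rule eq_matI) auto

lemma lsa_eq:
  assumes Z: "Z \<in> carrier_mat (d+1) (n+1)" and A: "A \<in> carrier_mat d d"
  shows "lsa (P_mat d) (Q_mat d A) (M_mat n) Z = mat (d+1) (n+1) (\<lambda>(r,c).
     if r = d then (\<Sum>j<n. Z $$ (d,j) * (\<Sum>a<d. Z $$ (a,j) * (\<Sum>b<d. A $$ (a,b) * Z $$ (b,c)))) else 0)"
proof -
  have e1: "P_mat d * Z = mat (d+1) (n+1) (\<lambda>(r,c). if r = d then Z $$ (d,c) else 0)"
    apply (subst mat_of[OF Z]) unfolding P_eq mat_mult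
    by (rule eq_matI) (auto simp: if_distrib sum.delta' cong: if_cong)
  have e2: "P_mat d * Z * M_mat n = mat (d+1) (n+1) (\<lambda>(r,c). if r = d \<and> c < n then Z $$ (d,c) else 0)"
    unfolding e1 M_eq mat_mult
    by (rule eq_matI) (auto simp: if_distrib sum.delta' cong: if_cong)
  have e3: "transpose_mat Z * Q_mat d A * Z = mat (n+1) (n+1) (\<lambda>(j,c).
      (\<Sum>a<d. Z $$ (a,j) * (\<Sum>b<d. A $$ (a,b) * Z $$ (b,c))))"
    apply (subst (1 2) mat_of[OF Z]) unfolding Q_eq[OF A] mat_mult transpose_mat_eq
    apply (rule eq_matI)
    apply (auto simp: if_distrib sum.delta' sum_distrib_left sum_distrib_right mult.assoc cong: if_cong)
    apply (subst sum.swap) apply (simp add: mult.left_commute)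
    done
  show ?thesis unfolding lsa_def e2 e3 mat_mult
    by (rule eq_matI) (auto simp: if_distrib sum.delta' cong: if_cong)
qed

lemma grad_risk:
  assumes w: "w \<in> carrier_vec d" and xs: "\<And>j. j \<in> {1..n+1} \<Longrightarrow> xs j \<in> carrier_vec d"
  shows "grad d (risk n xs wstar) w = vec d (\<lambda>a. (1 / real n) * (\<Sum>l=1..n. (w \<bullet> xs l - wstar \<bullet> xs l) * xs l $ a))"
  unfolding grad_def
proof (rule eq_vecI)
  fix a assume "a < dim_vec (vec d (\<lambda>a. (1 / real n) * (\<Sum>l=1..n. (w \<bullet> xs l - wstar \<bullet> xs l) * xs l $ a)))"
  hence a: "a < d" by simp
  let ?D = "(1 / real n) * (\<Sum>l=1..n. (w \<bullet> xs l - wstar \<bullet> xs l) * xs l $ a)"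
  have feq: "(\<lambda>t. risk n xs wstar (w + t \<cdot>\<^sub>v unit_vec d a)) =
     (\<lambda>t. 1 / (2 * real n) * (\<Sum>l=1..n. ((w \<bullet> xs l - wstar \<bullet> xs l) + t * xs l $ a)^2))"
  proof
    fix t
    have "\<And>l. l \<in> {1..n} \<Longrightarrow> (w + t \<cdot>\<^sub>v unit_vec d a) \<bullet> xs l = w \<bullet> xs l + t * xs l $ a"
    proof -
      fix l assume l: "l \<in> {1..n}"
      hence xl: "xs l \<in> carrier_vec d" using xs by auto
      have "(w + t \<cdot>\<^sub>v unit_vec d a) \<bullet> xs l = w \<bullet> xs l + (t \<cdot>\<^sub>v unit_vec d a) \<bullet> xs l"
        by (rule add_scalar_prod_distrib[OF w _ xl]) simp
      also have "(t \<cdot>\<^sub>v unit_vec d a) \<bullet> xs l = t * (unit_vec d a \<bullet> xs l)"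
        by (rule smult_scalar_prod_distrib[OF _ xl]) simp
      also have "unit_vec d a \<bullet> xs l = xs l $ a"
        using scalar_prod_left_unit[OF xl a] .
      finally show "(w + t \<cdot>\<^sub>v unit_vec d a) \<bullet> xs l = w \<bullet> xs l + t * xs l $ a" .
    qed
    thus "risk n xs wstar (w + t \<cdot>\<^sub>v unit_vec d a) =
       1 / (2 * real n) * (\<Sum>l=1..n. ((w \<bullet> xs l - wstar \<bullet> xs l) + t * xs l $ a)^2)"
      unfolding risk_def by (intro arg_cong2[where f="(*)"] refl sum.cong) (auto simp: algebra_simps)
  qed
  have der: "((\<lambda>t. risk n xs wstar (w + t \<cdot>\<^sub>v unit_vec d a)) has_real_derivative ?D) (at 0)"
    unfolding feq
    apply (rule derivative_eq_intros refl)+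
    apply (simp add: sum_divide_distrib)
    apply (intro sum.cong refl)
    apply (simp add: field_simps)
    done
  show "vec d (\<lambda>j. THE D. ((\<lambda>t. risk n xs wstar (w + t \<cdot>\<^sub>v unit_vec d j)) has_real_derivative D) (at 0)) $ a =
    vec d (\<lambda>a. (1 / real n) * (\<Sum>l=1..n. (w \<bullet> xs l - wstar \<bullet> xs l) * xs l $ a)) $ a"
    using a der by (simp only: index_vec) (metis (no_types, lifting) DERIV_unique the_equality)
qed simp


lemma key:
  fixes e :: "nat \<Rightarrow> real" and y :: "nat \<Rightarrow> nat \<Rightarrow> real" and S :: "nat \<Rightarrow> nat \<Rightarrow> real"
  assumes sym: "\<And>a b. a < d \<Longrightarrow> b < d \<Longrightarrow> S b a = S a b"
  shows "(\<Sum>b<d. x b * (\<Sum>a<d. S b a * ((1/c) * (\<Sum>j<n. e j * y j a)))) =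
         (1/c) * (\<Sum>j<n. e j * (\<Sum>a<d. y j a * (\<Sum>b<d. S a b * x b)))"
proof -
  have "(\<Sum>b<d. x b * (\<Sum>a<d. S b a * ((1/c) * (\<Sum>j<n. e j * y j a)))) =
        (\<Sum>b<d. \<Sum>a<d. \<Sum>j<n. (1/c) * (e j * y j a * S a b * x b))"
    by (auto simp: sum_distrib_left sym mult_ac intro!: sum.cong)
  also have "\<dots> = (\<Sum>a<d. \<Sum>b<d. \<Sum>j<n. (1/c) * (e j * y j a * S a b * x b))"
    by (rule sum.swap)
  also have "\<dots> = (\<Sum>a<d. \<Sum>j<n. \<Sum>b<d. (1/c) * (e j * y j a * S a b * x b))"
    by (intro sum.cong refl sum.swap)
  also have "\<dots> = (\<Sum>j<n. \<Sum>a<d. \<Sum>b<d. (1/c) * (e j * y j a * S a b * x b))"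
    by (rule sum.swap)
  also have "\<dots> = (1/c) * (\<Sum>j<n. e j * (\<Sum>a<d. y j a * (\<Sum>b<d. S a b * x b)))"
    by (simp add: sum_distrib_left mult_ac)
  finally show ?thesis .
qed

fun wgd_seq :: "nat \<Rightarrow> nat \<Rightarrow> (nat \<Rightarrow> real vec) \<Rightarrow> real vec \<Rightarrow> (nat \<Rightarrow> real mat) \<Rightarrow> nat \<Rightarrow> real vec" where
  "wgd_seq d n xs wstar A 0 = 0\<^sub>v d"
| "wgd_seq d n xs wstar A (Suc i) = (let w = wgd_seq d n xs wstar A i in w + A i *\<^sub>v grad d (risk n xs wstar) w)"

lemma invariant:
  fixes d n k :: nat and xs :: "nat \<Rightarrow> real vec" and wstar :: "real vec"
    and A :: "nat \<Rightarrow> real mat"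
  assumes xs: "\<And>j. j \<in> {1..n+1} \<Longrightarrow> xs j \<in> carrier_vec d"
    and ws: "wstar \<in> carrier_vec d"
    and Ac: "\<And>i. i \<le> k \<Longrightarrow> A i \<in> carrier_mat d d"
    and As: "\<And>i. i \<le> k \<Longrightarrow> transpose_mat (A i) = A i"
  shows "i \<le> k + 1 \<Longrightarrow> wgd_seq d n xs wstar A i \<in> carrier_vec d \<and>
     Z_layers d n xs wstar A i \<in> carrier_mat (d+1) (n+1) \<and>
     (\<forall>r<d. \<forall>c<n+1. Z_layers d n xs wstar A i $$ (r,c) = xs (c+1) $ r) \<and>
     (\<forall>c<n+1. Z_layers d n xs wstar A i $$ (d,c) =
        (if c < n then xs (c+1) \<bullet> wstar else 0) - xs (c+1) \<bullet> wgd_seq d n xs wstar A i)"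
proof (induction i)
  case 0
  have "\<And>c. c < n+1 \<Longrightarrow> xs (c+1) \<bullet> 0\<^sub>v d = 0"
    using xs by (simp add: scalar_prod_right_zero)
  then show ?case by (auto simp: Z0_mat_def)
next
  case (Suc i)
  hence ik: "i \<le> k" by simp
  from Suc have IH:
    "wgd_seq d n xs wstar A i \<in> carrier_vec d"
    "Z_layers d n xs wstar A i \<in> carrier_mat (d+1) (n+1)"
    "\<forall>r<d. \<forall>c<n+1. Z_layers d n xs wstar A i $$ (r,c) = xs (c+1) $ r"
    "\<forall>c<n+1. Z_layers d n xs wstar A i $$ (d,c) =
        (if c < n then xs (c+1) \<bullet> wstar else 0) - xs (c+1) \<bullet> wgd_seq d n xs wstar A i"
    by auto
  define w where "w = wgd_seq d n xs wstar A i"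
  define Z where "Z = Z_layers d n xs wstar A i"
  define g where "g = grad d (risk n xs wstar) w"
  have wc: "w \<in> carrier_vec d" using IH(1) w_def by simp
  have Zc: "Z \<in> carrier_mat (d+1) (n+1)" using IH(2) Z_def by simp
  have Aic: "A i \<in> carrier_mat d d" using Ac ik by simp
  have gc: "g \<in> carrier_vec d" unfolding g_def grad_def by simp
  have g: "g = vec d (\<lambda>a. (1 / real n) * (\<Sum>l=1..n. (w \<bullet> xs l - wstar \<bullet> xs l) * xs l $ a))"
    unfolding g_def by (rule grad_risk[OF wc xs])
  have wS: "wgd_seq d n xs wstar A (Suc i) = w + A i *\<^sub>v g"
    by (simp add: w_def g_def Let_def)
  have ZS: "Z_layers d n xs wstar A (Suc i) = Z + (1 / real n) \<cdot>\<^sub>m lsa (P_mat d) (Q_mat d (A i)) (M_mat n) Z"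
    by (simp add: Z_def Let_def)
  have L: "lsa (P_mat d) (Q_mat d (A i)) (M_mat n) Z = mat (d+1) (n+1) (\<lambda>(r,c).
     if r = d then (\<Sum>j<n. Z $$ (d,j) * (\<Sum>a<d. Z $$ (a,j) * (\<Sum>b<d. A i $$ (a,b) * Z $$ (b,c)))) else 0)"
    by (rule lsa_eq[OF Zc Aic])
  have wSc: "wgd_seq d n xs wstar A (Suc i) \<in> carrier_vec d"
    unfolding wS using wc Aic gc by auto
  have ZSc: "Z_layers d n xs wstar A (Suc i) \<in> carrier_mat (d+1) (n+1)"
    unfolding ZS L using Zc by auto
  have top: "\<forall>r<d. \<forall>c<n+1. Z_layers d n xs wstar A (Suc i) $$ (r,c) = xs (c+1) $ r"
    unfolding ZS L using Zc IH(3) Z_def by auto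
  have bot: "Z_layers d n xs wstar A (Suc i) $$ (d,c) =
        (if c < n then xs (c+1) \<bullet> wstar else 0) - xs (c+1) \<bullet> wgd_seq d n xs wstar A (Suc i)"
    if c: "c < n+1" for c
  proof -
    have xc: "xs (c+1) \<in> carrier_vec d" using xs c by auto
    have xj: "xs (j+1) \<in> carrier_vec d" if "j < n" for j using xs that by auto
    have sym: "A i $$ (b,a) = A i $$ (a,b)" if "a < d" "b < d" for a b
    proof -
      have "transpose_mat (A i) $$ (a,b) = A i $$ (b,a)" using Aic that by auto
      thus ?thesis using As[OF ik] by simp
    qed
    define S where "S = (\<Sum>j<n. Z $$ (d,j) * (\<Sum>a<d. Z $$ (a,j) * (\<Sum>b<d. A i $$ (a,b) * Z $$ (b,c))))"
    have hA: "Z_layers d n xs wstar A (Suc i) $$ (d,c) = Z $$ (d,c) + (1 / real n) * S"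
      unfolding ZS L S_def using Zc c by auto
    have hS: "S = (\<Sum>j<n. (- (w \<bullet> xs (j+1) - wstar \<bullet> xs (j+1))) * (\<Sum>a<d. xs (j+1) $ a * (\<Sum>b<d. A i $$ (a,b) * xs (c+1) $ b)))"
      unfolding S_def using IH(3,4) c xj wc ws
      by (auto simp: Z_def w_def comm_scalar_prod[of _ d] intro!: sum.cong)
    have "xs (c+1) \<bullet> (A i *\<^sub>v g) = (\<Sum>b<d. xs (c+1) $ b * (\<Sum>a<d. A i $$ (b,a) * ((1/real n) * (\<Sum>j<n. (w \<bullet> xs (j+1) - wstar \<bullet> xs (j+1)) * xs (j+1) $ a))))"
    proof -
      have sh: "(\<Sum>l=1..n. f l) = (\<Sum>j<n. f (j+1))" for f :: "nat \<Rightarrow> real"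
        by (rule sum.reindex_bij_witness[of _ "\<lambda>j. j + 1" "\<lambda>l. l - 1"]) auto
      have g2: "g = vec d (\<lambda>a. (1/real n) * (\<Sum>j<n. (w \<bullet> xs (j+1) - wstar \<bullet> xs (j+1)) * xs (j+1) $ a))"
        unfolding g by (subst sh) (rule refl)
      have e1: "xs (c+1) \<bullet> (A i *\<^sub>v g) = (\<Sum>b<d. xs (c+1) $ b * (A i *\<^sub>v g) $ b)"
        using Aic by (simp add: scalar_prod_def lessThan_atLeast0)
      have e2: "(A i *\<^sub>v g) $ b = (\<Sum>a<d. A i $$ (b,a) * g $ a)" if "b < d" for b
        using Aic gc that by (simp add: scalar_prod_def row_def lessThan_atLeast0)
      show ?thesis unfolding e1
        apply (intro sum.cong refl)
        apply (subst e2, simp)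
        apply (simp add: g2)
        done
    qed
    also have "\<dots> = (1/real n) * (\<Sum>j<n. (w \<bullet> xs (j+1) - wstar \<bullet> xs (j+1)) * (\<Sum>a<d. xs (j+1) $ a * (\<Sum>b<d. A i $$ (a,b) * xs (c+1) $ b)))"
      by (rule key) (rule sym)
    finally have hB: "xs (c+1) \<bullet> (A i *\<^sub>v g) = (1/real n) * (\<Sum>j<n. (w \<bullet> xs (j+1) - wstar \<bullet> xs (j+1)) * (\<Sum>a<d. xs (j+1) $ a * (\<Sum>b<d. A i $$ (a,b) * xs (c+1) $ b)))" .
    have X: "Z_layers d n xs wstar A (Suc i) $$ (d,c) = Z $$ (d,c) - xs (c+1) \<bullet> (A i *\<^sub>v g)"
      unfolding hA hS hB by (simp only: mult_minus_left sum_negf)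
    have "xs (c+1) \<bullet> wgd_seq d n xs wstar A (Suc i) = xs (c+1) \<bullet> w + xs (c+1) \<bullet> (A i *\<^sub>v g)"
      unfolding wS using xc wc Aic gc by (simp add: scalar_prod_add_distrib[of _ d])
    thus ?thesis using X IH(4) c by (simp add: Z_def w_def)
  qed
  show ?case using wSc ZSc top bot by auto
qed

theorem lemma1:
  fixes d n k :: nat and xs :: "nat \<Rightarrow> real vec" and wstar :: "real vec"
    and A :: "nat \<Rightarrow> real mat"
  assumes "d \<ge> 1" and "n \<ge> 1" and "k \<ge> 1"
    and "\<And>j. j \<in> {1..n+1} \<Longrightarrow> xs j \<in> carrier_vec d"
    and "wstar \<in> carrier_vec d"
    and "\<And>i. i \<le> k \<Longrightarrow> A i \<in> carrier_mat d d"
    and "\<And>i. i \<le> k \<Longrightarrow> transpose_mat (A i) = A i"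
  shows "\<exists>wgd :: nat \<Rightarrow> real vec.
           (\<forall>i \<le> k + 1. wgd i \<in> carrier_vec d \<and>
              Z_layers d n xs wstar A i $$ (d, n) = - (xs (n + 1) \<bullet> wgd i)) \<and>
           (\<forall>i \<le> k. wgd (Suc i) = wgd i + A i *\<^sub>v grad d (risk n xs wstar) (wgd i))"
proof (intro exI[of _ "wgd_seq d n xs wstar A"] conjI allI impI)
  fix i assume "i \<le> k + 1"
  note inv = invariant[where xs=xs and A=A and n=n and k=k and d=d, OF assms(4-7) this]
  show "wgd_seq d n xs wstar A i \<in> carrier_vec d" using inv by blast
  show "Z_layers d n xs wstar A i $$ (d, n) = - (xs (n + 1) \<bullet> wgd_seq d n xs wstar A i)"
    using inv by simp
next
  fix i show "wgd_seq d n xs wstar A (Suc i) = wgd_seq d n xs wstar A i + A i *\<^sub>v grad d (risk n xs wstar) (wgd_seq d n xs wstar A i)"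
    by (simp add: Let_def)
qed

end
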